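(* Let $Q$ be a countable dense subset of $2^\omega$. Let $T$ be a $G_\delta$ subset of $2^\omega\times2^\omega$ with $Q^2\subseteq T$, and let $g:T\to T$ be a homeomorphism such that $\pi_0\restriction g[Q^2]$ is injective. Let $h:2^\omega\to2^\omega$ be a homeomorphism and $i\in\{0,1\}$. Then the set $$C=\{(x,y)\in T: h(\pi_i(x,y))=\pi_0(g(x,y))\}$$ is closed and nowhere dense in $T$.
   Context: $\pi_0,\pi_1:2^\omega\times2^\omega\to2^\omega$ are the projections onto the first and second coordinate, respectively. $2^\omega$ is the Cantor set. *)

theory Defs
  imports "HOL-Analysis.Analysis"
begin

text \<open>The Cantor space 2^omega is modelled as the type nat \<Rightarrow> bool with the product
topology (bool carries the discrete topology). Products carry the product topology.\<close>

type_synonym cantor = "nat \<Rightarrow> bool"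

definition nowhere_dense_in :: "'a topology \<Rightarrow> 'a set \<Rightarrow> bool" where
  "nowhere_dense_in X S \<longleftrightarrow> X interior_of (X closure_of S) = {}"

definition proj :: "nat \<Rightarrow> 'a \<times> 'a \<Rightarrow> 'a" where
  "proj i p = (if i = 0 then fst p else snd p)"

end

theory Submission
  imports Defs
begin

lemma open_bool_sing: "open {b::bool}"
proof (cases b)
  case True
  have "{True} = {False<..}" by auto
  then show ?thesis using True by simp
next
  case False
  have "{False} = {..<True}" by auto
  then show ?thesis using False by simp
qed

lemma open_coord: "open {f::cantor. f n = b}"
proof -
  have "open {f::cantor. \<forall>i\<in>{n}. f (id i) \<in> {b}}"
    by (rule product_topology_basis') (auto simp: open_bool_sing)
  then show ?thesis by simp
qed

lemma cantor_split:
  fixes B :: "cantor set"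
  assumes "open B" "y \<in> B"
  shows "\<exists>B'. open B' \<and> B' \<subseteq> B \<and> B' \<noteq> {} \<and> y \<notin> B'"
proof -
  have "openin (product_topology (\<lambda>i. euclidean) UNIV) B"
    using assms(1) by (simp add: open_fun_def)
  from product_topology_open_contains_basis[OF this assms(2)]
  obtain X where X: "y \<in> (\<Pi>\<^sub>E i\<in>UNIV. X i)" "finite {i. X i \<noteq> topspace euclidean}"
    "(\<Pi>\<^sub>E i\<in>UNIV. X i) \<subseteq> B" by auto
  obtain n where n: "n \<notin> {i. X i \<noteq> topspace euclidean}"
    using X(2) by (meson ex_new_if_finite infinite_UNIV_nat)
  define z where "z = y(n := \<not> y n)"
  have "z \<in> (\<Pi>\<^sub>E i\<in>UNIV. X i)" using X(1) n by (auto simp: z_def PiE_iff)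
  hence "z \<in> B" using X(3) by auto
  define B' where "B' = B \<inter> {f. f n = z n}"
  have o: "open B'" unfolding B'_def by (rule open_Int[OF assms(1) open_coord])
  have zB: "z \<in> B'" unfolding B'_def using \<open>z \<in> B\<close> by simp
  have ny: "y \<notin> B'" unfolding B'_def by (simp add: z_def)
  have sub: "B' \<subseteq> B" unfolding B'_def by (rule Int_lower1)
  have ne: "B' \<noteq> {}"
  proof
    assume "B' = {}"
    with zB show False by (simp only: empty_iff)
  qed
  show ?thesis by (rule exI[of _ B']) (intro conjI o sub ne ny)
qed

lemma dense_meet:
  fixes Q :: "'a::topological_space set"
  assumes "closure Q = UNIV" "open S" "S \<noteq> {}"
  shows "\<exists>q\<in>Q. q \<in> S"
  using open_Int_closure_eq_empty[OF assms(2), of Q] assms by auto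

lemma two_points:
  fixes Q B :: "cantor set"
  assumes "closure Q = UNIV" "open B" "B \<noteq> {}"
  shows "\<exists>q1 q2. q1 \<in> Q \<and> q2 \<in> Q \<and> q1 \<in> B \<and> q2 \<in> B \<and> q1 \<noteq> q2"
proof -
  obtain q1 where q1: "q1 \<in> Q" "q1 \<in> B" using dense_meet[OF assms] by auto
  obtain B' where B': "open B'" "B' \<subseteq> B" "B' \<noteq> {}" "q1 \<notin> B'"
    using cantor_split[OF assms(2) q1(2)] by auto
  obtain q2 where "q2 \<in> Q" "q2 \<in> B'" using dense_meet[OF assms(1) B'(1,3)] by auto
  then show ?thesis using q1 B' by blast
qed

lemma closedin_eq_cantor:
  fixes f g :: "'a::topological_space \<Rightarrow> cantor"
  assumes "continuous_on T f" "continuous_on T g"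
  shows "closedin (top_of_set T) {p \<in> T. f p = g p}"
proof -
  have cl: "closed {(a,b). a = (b::bool)}"
  proof -
    have eq: "{(a,b). a = (b::bool)} = {y. \<exists>x::bool. y = (x,x)}" by auto
    show ?thesis unfolding eq by (rule closed_diagonal)
  qed
  have "closedin (top_of_set T) (T \<inter> (\<lambda>p. (f p n, g p n)) -` {(a,b). a = b})" for n
  proof -
    have cf: "continuous_on T (\<lambda>p. f p n)" by (rule continuous_on_product_then_coordinatewise[OF assms(1)])
    have cg: "continuous_on T (\<lambda>p. g p n)" by (rule continuous_on_product_then_coordinatewise[OF assms(2)])
    show ?thesis by (rule continuous_closedin_preimage[OF continuous_on_Pair[OF cf cg] cl])
  qed
  hence "closedin (top_of_set T) (T \<inter> (\<Inter>n. T \<inter> (\<lambda>p. (f p n, g p n)) -` {(a,b). a = b}))"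
    by (intro closedin_Int closedin_Inter) auto
  moreover have "T \<inter> (\<Inter>n. T \<inter> (\<lambda>p. (f p n, g p n)) -` {(a,b). a = b}) = {p \<in> T. f p = g p}"
    by (auto simp: fun_eq_iff)
  ultimately show ?thesis by simp
qed

theorem mainTheorem6:
  fixes Q :: "cantor set" and T :: "(cantor \<times> cantor) set"
    and g :: "cantor \<times> cantor \<Rightarrow> cantor \<times> cantor" and h :: "cantor \<Rightarrow> cantor" and i :: nat
  assumes "countable Q" and "closure Q = UNIV"
    and "gdelta_in euclidean T" and "Q \<times> Q \<subseteq> T"
    and "\<exists>g'. homeomorphism T T g g'"
    and "inj_on fst (g ` (Q \<times> Q))"
    and "\<exists>h'. homeomorphism UNIV UNIV h h'"
    and "i \<in> {0, 1}"
  shows "closedin (top_of_set T) {p \<in> T. h (proj i p) = proj 0 (g p)}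
       \<and> nowhere_dense_in (top_of_set T) {p \<in> T. h (proj i p) = proj 0 (g p)}"
proof -
  define C where "C = {p \<in> T. h (proj i p) = proj 0 (g p)}"
  obtain g' where g': "homeomorphism T T g g'" using assms(5) by auto
  obtain h' where h': "homeomorphism UNIV UNIV h h'" using assms(7) by auto
  have gc: "continuous_on T g" and ginv: "\<And>p. p \<in> T \<Longrightarrow> g' (g p) = p"
    using g' by (auto simp: homeomorphism_def)
  have hc: "continuous_on UNIV h" using h' by (auto simp: homeomorphism_def)
  have f1: "continuous_on T fst" by (intro continuous_intros)
  have f2: "continuous_on T snd" by (intro continuous_intros)
  have pc: "continuous_on T (proj i)"
    unfolding proj_def by (cases "i = 0") (simp_all add: f1 f2)
  have c1: "continuous_on T (\<lambda>p. h (proj i p))"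
    by (rule continuous_on_compose2[OF hc pc]) auto
  have c2: "continuous_on T (\<lambda>p. proj 0 (g p))"
    unfolding proj_def by (simp add: continuous_on_fst gc)
  have cl: "closedin (top_of_set T) C"
    unfolding C_def by (rule closedin_eq_cantor[OF c1 c2])
  have key: False if ab: "open A" "open B" "(A \<times> B) \<inter> T \<subseteq> C" "A \<noteq> {}" "B \<noteq> {}" for A B
  proof -
    have inj: False if "x1 \<in> Q" "y1 \<in> Q" "x2 \<in> Q" "y2 \<in> Q" "(x1,y1) \<noteq> (x2,y2)"
       "fst (g (x1,y1)) = fst (g (x2,y2))" for x1 y1 x2 y2
    proof -
      have "g (x1,y1) = g (x2,y2)"
        using assms(6) that by (auto simp: inj_on_def)
      hence "g' (g (x1,y1)) = g' (g (x2,y2))" by simp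
      moreover have "(x1,y1) \<in> T" "(x2,y2) \<in> T" using assms(4) that by auto
      ultimately show False using ginv[of "(x1,y1)"] ginv[of "(x2,y2)"] that(5) by simp
    qed
    have inC: "h (proj i (x,y)) = fst (g (x,y))" if "x \<in> Q" "y \<in> Q" "x \<in> A" "y \<in> B" for x y
      using ab(3) assms(4) that by (auto simp: C_def proj_def)
    show False
    proof (cases "i = 0")
      case True
      obtain x where x: "x \<in> Q" "x \<in> A" using dense_meet[OF assms(2) ab(1,4)] by auto
      obtain q1 q2 where q: "q1 \<in> Q" "q2 \<in> Q" "q1 \<in> B" "q2 \<in> B" "q1 \<noteq> q2"
        using two_points[OF assms(2) ab(2,5)] by auto
      have e1: "h x = fst (g (x,q1))" using inC[OF x(1) q(1) x(2) q(3)] True by (simp add: proj_def)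
      have e2: "h x = fst (g (x,q2))" using inC[OF x(1) q(2) x(2) q(4)] True by (simp add: proj_def)
      have ne: "(x,q1) \<noteq> (x,q2)" using q(5) by simp
      show False by (rule inj[OF x(1) q(1) x(1) q(2) ne]) (simp only: e1[symmetric] e2[symmetric])
    next
      case False
      obtain y where y: "y \<in> Q" "y \<in> B" using dense_meet[OF assms(2) ab(2,5)] by auto
      obtain q1 q2 where q: "q1 \<in> Q" "q2 \<in> Q" "q1 \<in> A" "q2 \<in> A" "q1 \<noteq> q2"
        using two_points[OF assms(2) ab(1,4)] by auto
      have e1: "h y = fst (g (q1,y))" using inC[OF q(1) y(1) q(3) y(2)] False by (simp add: proj_def)
      have e2: "h y = fst (g (q2,y))" using inC[OF q(2) y(1) q(4) y(2)] False by (simp add: proj_def)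
      have ne: "(q1,y) \<noteq> (q2,y)" using q(5) by simp
      show False by (rule inj[OF q(1) y(1) q(2) y(1) ne]) (simp only: e1[symmetric] e2[symmetric])
    qed
  qed
  have "top_of_set T interior_of C = {}"
  proof (rule ccontr)
    assume "top_of_set T interior_of C \<noteq> {}"
    then obtain p U where pU: "openin (top_of_set T) U" "p \<in> U" "U \<subseteq> C"
      by (auto simp: interior_of_def)
    then obtain V where V: "open V" "U = T \<inter> V" by (auto simp: openin_open)
    then obtain A B where AB: "open A" "open B" "p \<in> A \<times> B" "A \<times> B \<subseteq> V"
      using pU(2) by (metis IntD2 open_prod_elim)
    show False
    proof (rule key[OF AB(1,2)])
      have "A \<times> B \<inter> T \<subseteq> U" using AB(4) V(2) by blast
      then show "A \<times> B \<inter> T \<subseteq> C" using pU(3) by blast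
      show "A \<noteq> {}" "B \<noteq> {}" using AB(3) by (cases p, blast)+
    qed
  qed
  hence "nowhere_dense_in (top_of_set T) C"
    unfolding nowhere_dense_in_def using cl by (simp add: closure_of_closedin)
  with cl show ?thesis unfolding C_def by simp
qed

end
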